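(* If $N$ is a normal form, i.e. $N$ is generated by the grammar $N ::= xN_1\cdots N_k \mid \lambda x.N \mid \mu\alpha.[\beta]N$ ($k\ge0$), then there exist a basis $\Gamma$, a name context $\Delta$ and $\kappa\in\mathcal{T}_C$ such that $\Gamma\vdash N:\kappa\to\nu\mid\Delta$ is derivable in the intersection type system.
   Context: $\lambda\mu$-terms: $M,N ::= x \mid \lambda x.M \mid MN \mid \mu\alpha.[\beta]M$ over disjoint denumerable sets of term variables and names ($\lambda$ binds $x$, $\mu$ binds $\alpha$; bound and free variables/names assumed distinct). Types: with constant $\nu$ and symbol $\omega$ (not itself a type), $\mathcal{T}_D:\ \delta ::= \nu \mid \omega\to\nu \mid \kappa\to\nu \mid \delta\wedge\delta$; $\mathcal{T}_C:\ \kappa ::= \delta\times\omega \mid \delta\times\kappa \mid \kappa\wedge\kappa$ ($\times$ right-associative). $\le$ is the least preorder on $\mathcal{T}_D$ and on $\mathcal{T}_C$ such that: $\sigma\wedge\tau\le\sigma$; $\sigma\wedge\tau\le\tau$; $\nu\le\omega\to\nu$; $\omega\to\nu\le\nu$; $\delta_1\times\delta_2\times\omega\le\delta_1\times\omega$; $(\delta_1\times\omega)\wedge(\delta_2\times\kappa)\le(\delta_1\wedge\delta_2)\times\kappa$; $(\delta_1\times\kappa_1)\wedge(\delta_2\times\kappa_2)\le(\delta_1\wedge\delta_2)\times(\kappa_1\wedge\kappa_2)$; $\delta_1\le\delta_2\Rightarrow\delta_1\times\omega\le\delta_2\times\omega$; $\delta_1\le\delta_2,\kappa_1\le\kappa_2\Rightarrow\delta_1\times\kappa_1\le\delta_2\times\kappa_2$;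 $\sigma\le\tau_1,\sigma\le\tau_2\Rightarrow\sigma\le\tau_1\wedge\tau_2$; $\kappa_2\le\kappa_1\Rightarrow\kappa_1\to\nu\le\kappa_2\to\nu$. Typing: bases $\Gamma$ (finite maps variables $\to\mathcal{T}_D$), name contexts $\Delta$ (finite maps names $\to\mathcal{T}_C$); judgements $\Gamma\vdash M:\delta\mid\Delta$, with variables of $\Gamma$ and names of $\Delta$ not bound in $M$. Rules: (ax) $\Gamma,x{:}\delta\vdash x:\delta\mid\Delta$; (abs) from $\Gamma,x{:}\delta\vdash M:\kappa\to\nu\mid\Delta$ infer $\Gamma\vdash\lambda x.M:\delta\times\kappa\to\nu\mid\Delta$; (app) from $\Gamma\vdash M:\delta\times\kappa\to\nu\mid\Delta$ and $\Gamma\vdash N:\delta\mid\Delta$ infer $\Gamma\vdash MN:\kappa\to\nu\mid\Delta$ ($\kappa\in\mathcal{T}_C$ or $\kappa=\omega$); ($\mu$) from $\Gamma\vdash M:\kappa'\to\nu\mid\alpha{:}\kappa,\beta{:}\kappa',\Delta$ infer $\Gamma\vdash\mu\alpha.[\beta]M:\kappa\to\nu\mid\beta{:}\kappa',\Delta$ ($\beta\neq\alpha$), and from $\Gamma\vdash M:\kappa\to\nu\mid\alpha{:}\kappa,\Delta$ infer $\Gamma\vdash\mu\alpha.[\alpha]M:\kappa\to\nu\mid\Delta$; ($\le$) from $\Gamma\vdash M:\delta\mid\Delta$, $\delta\le\delta'$ infer $\Gamma\vdash M:\delta'\mid\Delta$; ($\wedge$) from $\Gamma\vdash M:\delta\mid\Delta$,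 $\Gamma\vdash M:\delta'\mid\Delta$ infer $\Gamma\vdash M:\delta\wedge\delta'\mid\Delta$. *)

theory Defs
  imports Main
begin

datatype ('v, 'n) trm =
    Var 'v
  | Lam 'v "('v, 'n) trm"
  | App "('v, 'n) trm" "('v, 'n) trm"
  | Mu 'n 'n "('v, 'n) trm"   \<comment> \<open>Mu a b M  stands for  mu a.[b]M\<close>

fun fvars :: "('v, 'n) trm \<Rightarrow> 'v set" where
  "fvars (Var x) = {x}"
| "fvars (Lam x M) = fvars M - {x}"
| "fvars (App M N) = fvars M \<union> fvars N"
| "fvars (Mu a b M) = fvars M"

fun bvars :: "('v, 'n) trm \<Rightarrow> 'v set" where
  "bvars (Var x) = {}"
| "bvars (Lam x M) = insert x (bvars M)"
| "bvars (App M N) = bvars M \<union> bvars N"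
| "bvars (Mu a b M) = bvars M"

fun fnames :: "('v, 'n) trm \<Rightarrow> 'n set" where
  "fnames (Var x) = {}"
| "fnames (Lam x M) = fnames M"
| "fnames (App M N) = fnames M \<union> fnames N"
| "fnames (Mu a b M) = insert b (fnames M) - {a}"

fun bnames :: "('v, 'n) trm \<Rightarrow> 'n set" where
  "bnames (Var x) = {}"
| "bnames (Lam x M) = bnames M"
| "bnames (App M N) = bnames M \<union> bnames N"
| "bnames (Mu a b M) = insert a (bnames M)"

fun nested_distinct :: "('v, 'n) trm \<Rightarrow> bool" where
  "nested_distinct (Var x) = True"
| "nested_distinct (Lam x M) = (x \<notin> bvars M \<and> nested_distinct M)"
| "nested_distinct (App M N) = (nested_distinct M \<and> nested_distinct N)"
| "nested_distinct (Mu a b M) = (a \<notin> bnames M \<and> nested_distinct M)"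

definition var_convention :: "('v, 'n) trm \<Rightarrow> bool" where
  "var_convention M \<longleftrightarrow> bvars M \<inter> fvars M = {} \<and> bnames M \<inter> fnames M = {}
     \<and> nested_distinct M"

inductive normal_form :: "('v, 'n) trm \<Rightarrow> bool" where
  nf_head: "(\<forall>N \<in> set Ns. normal_form N) \<Longrightarrow> normal_form (foldl App (Var x) Ns)"
| nf_lam: "normal_form N \<Longrightarrow> normal_form (Lam x N)"
| nf_mu: "normal_form N \<Longrightarrow> normal_form (Mu a b N)"

text \<open>dtype = T_D, ctype = T_C. Nu = nu; ArrW = omega->nu; Arr k = k->nu;
  ProdW d = d x omega; Prod d k = d x k.\<close>
datatype dtype = Nu | ArrW | Arr ctype | DAnd dtype dtype
     and ctype = ProdW dtype | Prod dtype ctype | CAnd ctype ctype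

inductive leD :: "dtype \<Rightarrow> dtype \<Rightarrow> bool"
  and leC :: "ctype \<Rightarrow> ctype \<Rightarrow> bool" where
  leD_refl: "leD d d"
| leD_trans: "leD d1 d2 \<Longrightarrow> leD d2 d3 \<Longrightarrow> leD d1 d3"
| leC_refl: "leC k k"
| leC_trans: "leC k1 k2 \<Longrightarrow> leC k2 k3 \<Longrightarrow> leC k1 k3"
| leD_and1: "leD (DAnd d1 d2) d1"
| leD_and2: "leD (DAnd d1 d2) d2"
| leC_and1: "leC (CAnd k1 k2) k1"
| leC_and2: "leC (CAnd k1 k2) k2"
| leD_nu_arrw: "leD Nu ArrW"
| leD_arrw_nu: "leD ArrW Nu"
| leC_drop: "leC (Prod d1 (ProdW d2)) (ProdW d1)"
| leC_and_prodW: "leC (CAnd (ProdW d1) (Prod d2 k)) (Prod (DAnd d1 d2) k)"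
| leC_and_prod: "leC (CAnd (Prod d1 k1) (Prod d2 k2)) (Prod (DAnd d1 d2) (CAnd k1 k2))"
| leC_mono_prodW: "leD d1 d2 \<Longrightarrow> leC (ProdW d1) (ProdW d2)"
| leC_mono_prod: "leD d1 d2 \<Longrightarrow> leC k1 k2 \<Longrightarrow> leC (Prod d1 k1) (Prod d2 k2)"
| leD_glb: "leD d d1 \<Longrightarrow> leD d d2 \<Longrightarrow> leD d (DAnd d1 d2)"
| leC_glb: "leC k k1 \<Longrightarrow> leC k k2 \<Longrightarrow> leC k (CAnd k1 k2)"
| leD_arr: "leC k2 k1 \<Longrightarrow> leD (Arr k1) (Arr k2)"

type_synonym 'v basis = "'v \<rightharpoonup> dtype"
type_synonym 'n namectx = "'n \<rightharpoonup> ctype"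

definition wf_judg :: "'v basis \<Rightarrow> ('v, 'n) trm \<Rightarrow> 'n namectx \<Rightarrow> bool" where
  "wf_judg \<Gamma> M \<Delta> \<longleftrightarrow> finite (dom \<Gamma>) \<and> finite (dom \<Delta>)
     \<and> dom \<Gamma> \<inter> bvars M = {} \<and> dom \<Delta> \<inter> bnames M = {}"

inductive typing :: "'v basis \<Rightarrow> ('v, 'n) trm \<Rightarrow> dtype \<Rightarrow> 'n namectx \<Rightarrow> bool" where
  ty_ax: "\<Gamma> x = Some d \<Longrightarrow> wf_judg \<Gamma> (Var x) \<Delta> \<Longrightarrow> typing \<Gamma> (Var x) d \<Delta>"
| ty_abs: "x \<notin> dom \<Gamma> \<Longrightarrow> typing (\<Gamma>(x \<mapsto> d)) M (Arr k) \<Delta> \<Longrightarrow> wf_judg \<Gamma> (Lam x M) \<Delta>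
           \<Longrightarrow> typing \<Gamma> (Lam x M) (Arr (Prod d k)) \<Delta>"
| ty_absW: "x \<notin> dom \<Gamma> \<Longrightarrow> typing (\<Gamma>(x \<mapsto> d)) M ArrW \<Delta> \<Longrightarrow> wf_judg \<Gamma> (Lam x M) \<Delta>
           \<Longrightarrow> typing \<Gamma> (Lam x M) (Arr (ProdW d)) \<Delta>"
| ty_app: "typing \<Gamma> M (Arr (Prod d k)) \<Delta> \<Longrightarrow> typing \<Gamma> N d \<Delta> \<Longrightarrow> wf_judg \<Gamma> (App M N) \<Delta>
           \<Longrightarrow> typing \<Gamma> (App M N) (Arr k) \<Delta>"
| ty_appW: "typing \<Gamma> M (Arr (ProdW d)) \<Delta> \<Longrightarrow> typing \<Gamma> N d \<Delta> \<Longrightarrow> wf_judg \<Gamma> (App M N) \<Delta>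
           \<Longrightarrow> typing \<Gamma> (App M N) ArrW \<Delta>"
| ty_mu: "\<beta> \<noteq> \<alpha> \<Longrightarrow> \<alpha> \<notin> dom \<Delta> \<Longrightarrow> \<Delta> \<beta> = Some k'
          \<Longrightarrow> typing \<Gamma> M (Arr k') (\<Delta>(\<alpha> \<mapsto> k)) \<Longrightarrow> wf_judg \<Gamma> (Mu \<alpha> \<beta> M) \<Delta>
          \<Longrightarrow> typing \<Gamma> (Mu \<alpha> \<beta> M) (Arr k) \<Delta>"
| ty_mu_same: "\<alpha> \<notin> dom \<Delta> \<Longrightarrow> typing \<Gamma> M (Arr k) (\<Delta>(\<alpha> \<mapsto> k)) \<Longrightarrow> wf_judg \<Gamma> (Mu \<alpha> \<alpha> M) \<Delta>
          \<Longrightarrow> typing \<Gamma> (Mu \<alpha> \<alpha> M) (Arr k) \<Delta>"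
| ty_le: "typing \<Gamma> M d \<Delta> \<Longrightarrow> leD d d' \<Longrightarrow> wf_judg \<Gamma> M \<Delta> \<Longrightarrow> typing \<Gamma> M d' \<Delta>"
| ty_and: "typing \<Gamma> M d \<Delta> \<Longrightarrow> typing \<Gamma> M d' \<Delta> \<Longrightarrow> wf_judg \<Gamma> M \<Delta>
           \<Longrightarrow> typing \<Gamma> M (DAnd d d') \<Delta>"

end

theory Submission
  imports Defs
begin

definition leG :: "'v basis \<Rightarrow> 'v basis \<Rightarrow> bool" where
  "leG G' G \<longleftrightarrow> (\<forall>x d. G x = Some d \<longrightarrow> (\<exists>d'. G' x = Some d' \<and> leD d' d))"

definition leN :: "'n namectx \<Rightarrow> 'n namectx \<Rightarrow> bool" where
  "leN D' D \<longleftrightarrow> (\<forall>a c. D a = Some c \<longrightarrow> (\<exists>c'. D' a = Some c' \<and> leC c' c))"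

lemma typing_wf: "typing G M d D \<Longrightarrow> wf_judg G M D"
  by (induction rule: typing.induct) auto

lemma weaken:
  "typing G M d D \<Longrightarrow> leG G' G \<Longrightarrow> leN D' D \<Longrightarrow> wf_judg G' M D' \<Longrightarrow> typing G' M d D'"
proof (induction arbitrary: G' D' rule: typing.induct)
  case (ty_ax G x d D)
  then obtain d' where "G' x = Some d'" "leD d' d" unfolding leG_def by blast
  then show ?case using ty_ax by (meson typing.ty_ax typing.ty_le)
next
  case (ty_abs x G d M k D)
  have xn: "x \<notin> dom G'" using ty_abs.prems(3) unfolding wf_judg_def by auto
  have "x \<notin> bvars M" using typing_wf[OF ty_abs.hyps(2)] unfolding wf_judg_def by auto
  hence wf: "wf_judg (G'(x \<mapsto> d)) M D'" using ty_abs.prems(3) unfolding wf_judg_def by auto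
  have "leG (G'(x \<mapsto> d)) (G(x \<mapsto> d))" using ty_abs.prems(1) unfolding leG_def
    by (auto intro: leD_refl)
  then show ?case using ty_abs wf xn by (metis typing.ty_abs)
next
  case (ty_absW x G d M D)
  have xn: "x \<notin> dom G'" using ty_absW.prems(3) unfolding wf_judg_def by auto
  have "x \<notin> bvars M" using typing_wf[OF ty_absW.hyps(2)] unfolding wf_judg_def by auto
  hence wf: "wf_judg (G'(x \<mapsto> d)) M D'" using ty_absW.prems(3) unfolding wf_judg_def by auto
  have "leG (G'(x \<mapsto> d)) (G(x \<mapsto> d))" using ty_absW.prems(1) unfolding leG_def
    by (auto intro: leD_refl)
  then show ?case using ty_absW wf xn by (metis typing.ty_absW)
next
  case (ty_app G M d k D N)
  have "wf_judg G' M D'" "wf_judg G' N D'" using ty_app.prems(3) unfolding wf_judg_def by auto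
  then show ?case using ty_app by (metis typing.ty_app)
next
  case (ty_appW G M d D N)
  have "wf_judg G' M D'" "wf_judg G' N D'" using ty_appW.prems(3) unfolding wf_judg_def by auto
  then show ?case using ty_appW by (metis typing.ty_appW)
next
  case (ty_mu \<beta> \<alpha> D k' G M k)
  obtain k'' where k'': "D' \<beta> = Some k''" "leC k'' k'" using ty_mu.prems(2) ty_mu.hyps(3)
    unfolding leN_def by blast
  have an: "\<alpha> \<notin> dom D'" using ty_mu.prems(3) unfolding wf_judg_def by auto
  have "\<alpha> \<notin> bnames M" using typing_wf[OF ty_mu.hyps(4)] unfolding wf_judg_def by auto
  hence wf: "wf_judg G' M (D'(\<alpha> \<mapsto> k))" using ty_mu.prems(3) unfolding wf_judg_def by auto
  have "leN (D'(\<alpha> \<mapsto> k)) (D(\<alpha> \<mapsto> k))" using ty_mu.prems(2) unfolding leN_def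
    by (auto intro: leC_refl)
  hence "typing G' M (Arr k') (D'(\<alpha> \<mapsto> k))" using ty_mu wf by blast
  hence "typing G' M (Arr k'') (D'(\<alpha> \<mapsto> k))" using wf k''(2) by (meson typing.ty_le leD_arr)
  then show ?case using ty_mu.hyps(1) an k''(1) ty_mu.prems(3) by (metis typing.ty_mu)
next
  case (ty_mu_same \<alpha> D G M k)
  have an: "\<alpha> \<notin> dom D'" using ty_mu_same.prems(3) unfolding wf_judg_def by auto
  have "\<alpha> \<notin> bnames M" using typing_wf[OF ty_mu_same.hyps(2)] unfolding wf_judg_def by auto
  hence wf: "wf_judg G' M (D'(\<alpha> \<mapsto> k))" using ty_mu_same.prems(3) unfolding wf_judg_def by auto
  have "leN (D'(\<alpha> \<mapsto> k)) (D(\<alpha> \<mapsto> k))" using ty_mu_same.prems(2) unfolding leN_def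
    by (auto intro: leC_refl)
  then show ?case using ty_mu_same wf an by (metis typing.ty_mu_same)
next
  case (ty_le G M d D d')
  then show ?case by (meson typing.ty_le)
next
  case (ty_and G M d D d')
  then show ?case by (meson typing.ty_and)
qed

definition mergeG :: "'v basis \<Rightarrow> 'v basis \<Rightarrow> 'v basis" where
  "mergeG G1 G2 = (\<lambda>y. case G1 y of None \<Rightarrow> G2 y
     | Some a \<Rightarrow> (case G2 y of None \<Rightarrow> Some a | Some b \<Rightarrow> Some (DAnd a b)))"

definition mergeN :: "'n namectx \<Rightarrow> 'n namectx \<Rightarrow> 'n namectx" where
  "mergeN G1 G2 = (\<lambda>y. case G1 y of None \<Rightarrow> G2 y
     | Some a \<Rightarrow> (case G2 y of None \<Rightarrow> Some a | Some b \<Rightarrow> Some (CAnd a b)))"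

lemma mergeG_dom: "dom (mergeG G1 G2) = dom G1 \<union> dom G2"
  unfolding mergeG_def by (auto split: option.splits)
lemma mergeN_dom: "dom (mergeN G1 G2) = dom G1 \<union> dom G2"
  unfolding mergeN_def by (auto split: option.splits)
lemma mergeG_le1: "leG (mergeG G1 G2) G1"
  unfolding mergeG_def leG_def by (auto split: option.splits intro: leD_refl leD_and1)
lemma mergeG_le2: "leG (mergeG G1 G2) G2"
  unfolding mergeG_def leG_def by (auto split: option.splits intro: leD_refl leD_and2)
lemma mergeN_le1: "leN (mergeN G1 G2) G1"
  unfolding mergeN_def leN_def by (auto split: option.splits intro: leC_refl leC_and1)
lemma mergeN_le2: "leN (mergeN G1 G2) G2"
  unfolding mergeN_def leN_def by (auto split: option.splits intro: leC_refl leC_and2)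

lemma foldl_sets:
  "bvars (foldl App M Ns) = bvars M \<union> (\<Union>N\<in>set Ns. bvars N)"
  "fvars (foldl App M Ns) = fvars M \<union> (\<Union>N\<in>set Ns. fvars N)"
  "bnames (foldl App M Ns) = bnames M \<union> (\<Union>N\<in>set Ns. bnames N)"
  "fnames (foldl App M Ns) = fnames M \<union> (\<Union>N\<in>set Ns. fnames N)"
  "nested_distinct (foldl App M Ns) = (nested_distinct M \<and> (\<forall>N\<in>set Ns. nested_distinct N))"
  by (induction Ns arbitrary: M) auto

lemma fin_fvars: "finite (fvars M)" by (induction M) auto
lemma fin_fnames: "finite (fnames M)" by (induction M) auto

fun chain :: "dtype list \<Rightarrow> ctype \<Rightarrow> ctype" where
  "chain [] k = k"
| "chain (d # ds) k = Prod d (chain ds k)"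

lemma app_chain:
  "typing G M (Arr (chain ds k)) D \<Longrightarrow> list_all2 (\<lambda>N d. typing G N d D) Ns ds
   \<Longrightarrow> wf_judg G (foldl App M Ns) D \<Longrightarrow> typing G (foldl App M Ns) (Arr k) D"
proof (induction Ns arbitrary: M ds)
  case Nil
  then show ?case by simp
next
  case (Cons N Ns)
  then obtain d ds' where ds: "ds = d # ds'" "typing G N d D" "list_all2 (\<lambda>N d. typing G N d D) Ns ds'"
    by (cases ds) auto
  have wf: "wf_judg G (App M N) D" using Cons.prems(3) unfolding wf_judg_def foldl_sets by auto
  have "typing G (App M N) (Arr (chain ds' k)) D"
    using Cons.prems(1) ds wf by (metis chain.simps(2) typing.ty_app)
  then show ?case using Cons.IH[of "App M N" ds'] ds Cons.prems(3) by simp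
qed

lemma args_typing:
  assumes "\<forall>N\<in>set Ns. (\<exists>G D k. typing G N (Arr k) D \<and> dom G \<subseteq> fvars N \<and> dom D \<subseteq> fnames N)"
    and "(\<Union>N\<in>set Ns. fvars N) \<inter> (\<Union>N\<in>set Ns. bvars N) = {}"
    and "(\<Union>N\<in>set Ns. fnames N) \<inter> (\<Union>N\<in>set Ns. bnames N) = {}"
  shows "\<exists>G D ds. list_all2 (\<lambda>N d. typing G N d D) Ns ds \<and> dom G \<subseteq> (\<Union>N\<in>set Ns. fvars N)
     \<and> dom D \<subseteq> (\<Union>N\<in>set Ns. fnames N)"
  using assms
proof (induction Ns)
  case Nil
  then show ?case by (intro exI[of _ Map.empty]) auto
next
  case (Cons N Ns)
  obtain G1 D1 k where h1: "typing G1 N (Arr k) D1" "dom G1 \<subseteq> fvars N" "dom D1 \<subseteq> fnames N"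
    using Cons.prems(1) by auto
  obtain G2 D2 ds where h2: "list_all2 (\<lambda>N d. typing G2 N d D2) Ns ds"
    "dom G2 \<subseteq> (\<Union>N\<in>set Ns. fvars N)" "dom D2 \<subseteq> (\<Union>N\<in>set Ns. fnames N)"
  proof -
    have "(\<Union>N\<in>set Ns. fvars N) \<inter> (\<Union>N\<in>set Ns. bvars N) = {}"
      "(\<Union>N\<in>set Ns. fnames N) \<inter> (\<Union>N\<in>set Ns. bnames N) = {}"
      using Cons.prems(2,3) by auto
    then show ?thesis using Cons.IH Cons.prems(1) that by auto
  qed
  define G where "G = mergeG G1 G2"
  define D where "D = mergeN D1 D2"
  have domG: "dom G \<subseteq> (\<Union>N\<in>set (N#Ns). fvars N)" using h1 h2 unfolding G_def mergeG_dom by auto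
  have domD: "dom D \<subseteq> (\<Union>N\<in>set (N#Ns). fnames N)" using h1 h2 unfolding D_def mergeN_dom by auto
  have finG: "finite (dom G)"
    by (rule finite_subset[OF domG]) (auto simp: fin_fvars)
  have finD: "finite (dom D)"
    by (rule finite_subset[OF domD]) (auto simp: fin_fnames)
  have wf: "wf_judg G M D" if "M \<in> set (N#Ns)" for M
    using that domG domD finG finD Cons.prems(2,3) unfolding wf_judg_def by blast
  have t1: "typing G N (Arr k) D"
    using weaken[OF h1(1) mergeG_le1 mergeN_le1] wf unfolding G_def D_def by simp
  have "list_all2 (\<lambda>N d. typing G N d D) Ns ds"
    using h2(1) wf unfolding list_all2_conv_all_nth
    using weaken mergeG_le2 mergeN_le2 unfolding G_def D_def
    by (metis list.set_intros(2) nth_mem)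
  hence "list_all2 (\<lambda>N d. typing G N d D) (N#Ns) (Arr k # ds)" using t1 by simp
  then show ?case using domG domD by blast
qed

lemma main_gen:
  "normal_form N \<Longrightarrow> var_convention N \<longrightarrow>
    (\<exists>G D k. typing G N (Arr k) D \<and> dom G \<subseteq> fvars N \<and> dom D \<subseteq> fnames N)"
proof (induction rule: normal_form.induct)
  case (nf_head Ns x)
  show ?case
  proof
    assume vc: "var_convention (foldl App (Var x) Ns)"
    have vcs: "\<forall>N\<in>set Ns. var_convention N"
      using vc unfolding var_convention_def foldl_sets by auto
    have "\<exists>G D ds. list_all2 (\<lambda>N d. typing G N d D) Ns ds \<and> dom G \<subseteq> (\<Union>N\<in>set Ns. fvars N)
     \<and> dom D \<subseteq> (\<Union>N\<in>set Ns. fnames N)"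
      apply (rule args_typing)
      using nf_head vcs vc unfolding var_convention_def foldl_sets by auto
    then obtain G D ds where h: "list_all2 (\<lambda>N d. typing G N d D) Ns ds"
      "dom G \<subseteq> (\<Union>N\<in>set Ns. fvars N)" "dom D \<subseteq> (\<Union>N\<in>set Ns. fnames N)" by blast
    define T where "T = Arr (chain ds (ProdW Nu))"
    define G' where "G' = mergeG G [x \<mapsto> T]"
    let ?M = "foldl App (Var x) Ns"
    have domG: "dom G' \<subseteq> fvars ?M" using h unfolding G'_def mergeG_dom foldl_sets by auto
    have domD: "dom D \<subseteq> fnames ?M" using h unfolding foldl_sets by auto
    have finG: "finite (dom G')" by (rule finite_subset[OF domG]) (simp add: fin_fvars)
    have finD: "finite (dom D)" by (rule finite_subset[OF domD]) (simp add: fin_fnames)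
    have wfM: "wf_judg G' ?M D" using domG domD finG finD vc
      unfolding wf_judg_def var_convention_def by blast
    have wfs: "wf_judg G' N D" if "N \<in> set Ns" for N
      using wfM that unfolding wf_judg_def foldl_sets by auto
    have wfx: "wf_judg G' (Var x) D" using wfM unfolding wf_judg_def foldl_sets by auto
    have args: "list_all2 (\<lambda>N d. typing G' N d D) Ns ds"
      using h(1) wfs unfolding list_all2_conv_all_nth
      using weaken mergeG_le1 leN_def leC_refl unfolding G'_def
      by (metis nth_mem)
    obtain d' where "G' x = Some d'" "leD d' T"
      using mergeG_le2[of G "[x \<mapsto> T]"] unfolding leG_def G'_def
      by (metis fun_upd_same)
    hence "typing G' (Var x) T D" using wfx by (meson typing.ty_ax typing.ty_le)
    hence "typing G' ?M (Arr (ProdW Nu)) D" using app_chain args wfM unfolding T_def by blast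
    then show "\<exists>G D k. typing G ?M (Arr k) D \<and> dom G \<subseteq> fvars ?M \<and> dom D \<subseteq> fnames ?M"
      using domG domD by blast
  qed
next
  case (nf_lam N x)
  show ?case
  proof
    assume vc: "var_convention (Lam x N)"
    have xb: "x \<notin> bvars N" using vc unfolding var_convention_def by simp
    have "var_convention N" using vc xb unfolding var_convention_def by auto
    then obtain G D k where h: "typing G N (Arr k) D" "dom G \<subseteq> fvars N" "dom D \<subseteq> fnames N"
      using nf_lam by blast
    define d where "d = (case G x of None \<Rightarrow> Nu | Some c \<Rightarrow> c)"
    define G0 where "G0 = G(x := None)"
    have le: "leG (G0(x \<mapsto> d)) G" unfolding leG_def G0_def d_def by (auto intro: leD_refl)
    have domG0: "dom G0 \<subseteq> fvars (Lam x N)" using h unfolding G0_def by auto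
    have finG0: "finite (dom G0)" by (rule finite_subset[OF domG0]) (simp add: fin_fvars)
    have finD: "finite (dom D)" by (rule finite_subset[OF h(3)]) (simp add: fin_fnames)
    have wfL: "wf_judg G0 (Lam x N) D" using domG0 finG0 finD h(3) vc
      unfolding wf_judg_def var_convention_def by auto
    have wfN: "wf_judg (G0(x \<mapsto> d)) N D" using wfL xb unfolding wf_judg_def by auto
    have "typing (G0(x \<mapsto> d)) N (Arr k) D"
      using weaken[OF h(1) le] wfN unfolding leN_def by (auto intro: leC_refl)
    moreover have "x \<notin> dom G0" unfolding G0_def by simp
    ultimately have "typing G0 (Lam x N) (Arr (Prod d k)) D" using wfL by (metis typing.ty_abs)
    then show "\<exists>G D k. typing G (Lam x N) (Arr k) D \<and> dom G \<subseteq> fvars (Lam x N) \<and> dom D \<subseteq> fnames (Lam x N)"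
      using domG0 h(3) by auto
  qed
next
  case (nf_mu N a b)
  show ?case
  proof
    assume vc: "var_convention (Mu a b N)"
    have ab: "a \<notin> bnames N" using vc unfolding var_convention_def by simp
    have "var_convention N" using vc ab unfolding var_convention_def by auto
    then obtain G D k where h: "typing G N (Arr k) D" "dom G \<subseteq> fvars N" "dom D \<subseteq> fnames N"
      using nf_mu by blast
    have finG: "finite (dom G)" by (rule finite_subset[OF h(2)]) (simp add: fin_fvars)
    define K where "K = (case D b of None \<Rightarrow> k | Some c \<Rightarrow> CAnd k c)"
    have Kk: "leC K k" unfolding K_def by (auto split: option.splits intro: leC_refl leC_and1)
    show "\<exists>G D k. typing G (Mu a b N) (Arr k) D \<and> dom G \<subseteq> fvars (Mu a b N) \<and> dom D \<subseteq> fnames (Mu a b N)"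
    proof (cases "a = b")
      case True
      define D0 where "D0 = D(a := None)"
      have le: "leN (D0(a \<mapsto> K)) D" unfolding leN_def D0_def K_def True
        by (auto intro: leC_refl leC_and2)
      have domD0: "dom D0 \<subseteq> fnames (Mu a b N)" using h unfolding D0_def True by auto
      have finD0: "finite (dom D0)" by (rule finite_subset[OF domD0]) (simp add: fin_fnames)
      have wfM: "wf_judg G (Mu a a N) D0" using domD0 finD0 finG h(2) vc True
        unfolding wf_judg_def var_convention_def by auto
      have wfN: "wf_judg G N (D0(a \<mapsto> K))" using wfM ab unfolding wf_judg_def by auto
      have "typing G N (Arr k) (D0(a \<mapsto> K))"
        using weaken[OF h(1) _ le] wfN unfolding leG_def by (auto intro: leD_refl)
      hence "typing G N (Arr K) (D0(a \<mapsto> K))" using wfN Kk by (meson typing.ty_le leD_arr)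
      hence "typing G (Mu a a N) (Arr K) D0" using wfM unfolding D0_def
        by (metis typing.ty_mu_same domIff fun_upd_same)
      then show ?thesis using True domD0 h(2) by auto
    next
      case False
      define ka where "ka = (case D a of None \<Rightarrow> k | Some c \<Rightarrow> c)"
      define D0 where "D0 = (D(a := None))(b \<mapsto> K)"
      have le: "leN (D0(a \<mapsto> ka)) D" unfolding leN_def D0_def K_def ka_def using False
        by (auto intro: leC_refl leC_and2)
      have domD0: "dom D0 \<subseteq> fnames (Mu a b N)" using h False unfolding D0_def by auto
      have finD0: "finite (dom D0)" by (rule finite_subset[OF domD0]) (simp add: fin_fnames)
      have wfM: "wf_judg G (Mu a b N) D0" using domD0 finD0 finG h(2) vc
        unfolding wf_judg_def var_convention_def by auto
      have wfN: "wf_judg G N (D0(a \<mapsto> ka))" using wfM ab unfolding wf_judg_def by auto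
      have "typing G N (Arr k) (D0(a \<mapsto> ka))"
        using weaken[OF h(1) _ le] wfN unfolding leG_def by (auto intro: leD_refl)
      hence "typing G N (Arr K) (D0(a \<mapsto> ka))" using wfN Kk by (meson typing.ty_le leD_arr)
      moreover have "a \<notin> dom D0" "D0 b = Some K" unfolding D0_def using False by auto
      ultimately have "typing G (Mu a b N) (Arr ka) D0" using wfM False
        by (metis typing.ty_mu)
      then show ?thesis using domD0 h(2) by auto
    qed
  qed
qed

theorem mainTheorem12:
  fixes N :: "('v, 'n) trm"
  assumes "normal_form N" and "var_convention N"
  shows "\<exists>(\<Gamma> :: 'v basis) (\<Delta> :: 'n namectx) (k :: ctype). typing \<Gamma> N (Arr k) \<Delta>"
  using main_gen[OF assms(1)] assms(2) by blast

end
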